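(* For every claw-free graph $G$, $\chi(G^2)\le 2\omega(G)^2-2\omega(G)+1$.
   Context: Claw-free means no induced $K_{1,3}$. $G^2$ is the graph on $V(G)$ where distinct vertices are adjacent iff at distance at most $2$ in $G$. $\chi$ is chromatic number, $\omega$ clique number. *)

theory Defs
  imports Main
begin

definition simple_graph :: "'a set \<Rightarrow> ('a \<Rightarrow> 'a \<Rightarrow> bool) \<Rightarrow> bool" where
  "simple_graph V E \<longleftrightarrow> finite V \<and> (\<forall>x y. E x y \<longrightarrow> E y x) \<and> (\<forall>x. \<not> E x x)
     \<and> (\<forall>x y. E x y \<longrightarrow> x \<in> V \<and> y \<in> V)"

definition claw_free :: "'a set \<Rightarrow> ('a \<Rightarrow> 'a \<Rightarrow> bool) \<Rightarrow> bool" where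
  "claw_free V E \<longleftrightarrow> \<not> (\<exists>c\<in>V. \<exists>a\<in>V. \<exists>b\<in>V. \<exists>d\<in>V.
      E c a \<and> E c b \<and> E c d \<and> a \<noteq> b \<and> a \<noteq> d \<and> b \<noteq> d
      \<and> \<not> E a b \<and> \<not> E a d \<and> \<not> E b d)"

definition graph_square :: "'a set \<Rightarrow> ('a \<Rightarrow> 'a \<Rightarrow> bool) \<Rightarrow> 'a \<Rightarrow> 'a \<Rightarrow> bool" where
  "graph_square V E x y \<longleftrightarrow> x \<in> V \<and> y \<in> V \<and> x \<noteq> y \<and> (E x y \<or> (\<exists>z\<in>V. E x z \<and> E z y))"

definition proper_colouring :: "'a set \<Rightarrow> ('a \<Rightarrow> 'a \<Rightarrow> bool) \<Rightarrow> nat \<Rightarrow> ('a \<Rightarrow> nat) \<Rightarrow> bool" where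
  "proper_colouring V E k f \<longleftrightarrow> (\<forall>x\<in>V. f x < k) \<and> (\<forall>x\<in>V. \<forall>y\<in>V. E x y \<longrightarrow> f x \<noteq> f y)"

definition chromatic_number :: "'a set \<Rightarrow> ('a \<Rightarrow> 'a \<Rightarrow> bool) \<Rightarrow> nat" where
  "chromatic_number V E = (LEAST k. \<exists>f. proper_colouring V E k f)"

definition is_clique :: "'a set \<Rightarrow> ('a \<Rightarrow> 'a \<Rightarrow> bool) \<Rightarrow> 'a set \<Rightarrow> bool" where
  "is_clique V E K \<longleftrightarrow> K \<subseteq> V \<and> (\<forall>x\<in>K. \<forall>y\<in>K. x \<noteq> y \<longrightarrow> E x y)"

definition clique_number :: "'a set \<Rightarrow> ('a \<Rightarrow> 'a \<Rightarrow> bool) \<Rightarrow> nat" where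
  "clique_number V E = Max (card ` {K. is_clique V E K})"

end

theory Submission
  imports Defs
begin


lemma arith_final:
  fixes n m w :: nat
  assumes "2 \<le> w" "2*w - 1 \<le> n" "m*(n+3-2*w) \<le> n*(w-1)" "2*n \<le> (w-1)*(w+2)"
  shows "n + m \<le> 2*w^2 - 2*w"
proof (cases "w - 1 \<le> n+3-2*w")
  case True
  have "m*(w-1) \<le> m*(n+3-2*w)" using True by simp
  also have "\<dots> \<le> n*(w-1)" by fact
  finally have "m \<le> n" using assms(1) by simp
  hence "n+m \<le> (w-1)*(w+2)" using assms(4) by linarith
  moreover have "(w-1)*(w+2) \<le> 2*w^2 - 2*w"
  proof -
    obtain k where k: "w = k + 2" using assms(1) by (metis add.commute le_Suc_ex)
    show ?thesis unfolding k by (simp add: algebra_simps power2_eq_square)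
  qed
  ultimately show ?thesis by linarith
next
  case False
  obtain k where k: "w = k + 2" using assms(1) by (metis add.commute le_Suc_ex)
  have t2: "2 \<le> n+3-2*w" using assms(2) assms(1) by linarith
  have "m*2 \<le> m*(n+3-2*w)" using t2 by simp
  hence "2*m \<le> n*(w-1)" using assms(3) by linarith
  hence m2: "2*m \<le> n*(k+1)" using k by simp
  have nle: "n \<le> 3*k+1" using False k by linarith
  have "2*(n+m) \<le> n*(k+3)" using m2 by (simp add: algebra_simps)
  also have "\<dots> \<le> (3*k+1)*(k+3)" using nle by (rule mult_right_mono) simp
  also have "\<dots> \<le> 2*(2*w^2 - 2*w)" unfolding k by (simp add: algebra_simps power2_eq_square)
  finally show ?thesis by simp
qed

lemma greedy:
  fixes R :: "'a \<Rightarrow> 'a \<Rightarrow> bool"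
  assumes fin: "finite V" and nb: "\<And>x. x \<in> V \<Longrightarrow> {y. R x y} \<subseteq> V \<and> card {y. R x y} \<le> D"
    and sym: "\<And>x y. R x y \<Longrightarrow> R y x" and irr: "\<And>x. \<not> R x x"
  shows "finite S \<Longrightarrow> S \<subseteq> V \<Longrightarrow> \<exists>f. (\<forall>x\<in>S. f x < Suc D) \<and> (\<forall>x\<in>S. \<forall>y\<in>S. R x y \<longrightarrow> f x \<noteq> f y)"
proof (induction S rule: finite_induct)
    case empty then show ?case by auto
  next
    case (insert a S)
    then obtain f where f: "\<forall>x\<in>S. f x < Suc D" "\<forall>x\<in>S. \<forall>y\<in>S. R x y \<longrightarrow> f x \<noteq> f y" by auto
    define U where "U = f ` ({y. R a y} \<inter> S)"
    have aV: "a \<in> V" using insert by auto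
    have finN: "finite {y. R a y}" using nb[OF aV] fin finite_subset by blast
    have "card U \<le> card ({y. R a y} \<inter> S)" unfolding U_def by (rule card_image_le) (use finN in auto)
    also have "\<dots> \<le> card {y. R a y}" by (rule card_mono[OF finN]) auto
    also have "\<dots> \<le> D" using nb[OF aV] by auto
    finally have cU: "card U \<le> D" .
    have "\<exists>c<Suc D. c \<notin> U"
    proof (rule ccontr)
      assume "\<not> ?thesis"
      hence "{0..<Suc D} \<subseteq> U" by auto
      moreover have "finite U" unfolding U_def using finN by auto
      ultimately have "card {0..<Suc D} \<le> card U" by (rule card_mono[rotated])
      thus False using cU by simp
    qed
    then obtain c where c: "c < Suc D" "c \<notin> U" by blast
    let ?g = "f(a := c)"
    have "\<forall>x\<in>insert a S. ?g x < Suc D" using f c by auto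
    moreover have "\<forall>x\<in>insert a S. \<forall>y\<in>insert a S. R x y \<longrightarrow> ?g x \<noteq> ?g y"
    proof (intro ballI impI)
      fix x y assume xy: "x \<in> insert a S" "y \<in> insert a S" "R x y"
      show "?g x \<noteq> ?g y"
      proof (cases "x = a")
        case True
        then have "y \<noteq> a" using irr xy by auto
        then show ?thesis using True xy c unfolding U_def by auto
      next
        case False
        show ?thesis
        proof (cases "y = a")
          case True
          then have "R a x" using sym xy by auto
          then show ?thesis using True False xy c unfolding U_def by auto
        next
          case False2: False
          then show ?thesis using False xy f by auto
        qed
      qed
    qed
    ultimately show ?case by blast
qed



context
  fixes V :: "'a set" and E :: "'a \<Rightarrow> 'a \<Rightarrow> bool"
  assumes sg: "simple_graph V E" and cf: "claw_free V E"
begin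

lemma finV: "finite V" using sg unfolding simple_graph_def by auto
lemma symE: "E x y \<Longrightarrow> E y x" using sg unfolding simple_graph_def by auto
lemma irrE: "\<not> E x x" using sg unfolding simple_graph_def by auto
lemma inV: "E x y \<Longrightarrow> x \<in> V \<and> y \<in> V" using sg unfolding simple_graph_def by auto

lemma noclaw:
  assumes "E c a" "E c b" "E c d" "a \<noteq> b" "a \<noteq> d" "b \<noteq> d"
  shows "E a b \<or> E a d \<or> E b d"
proof -
  have V: "c \<in> V" "a \<in> V" "b \<in> V" "d \<in> V" using assms inV by auto
  show ?thesis
  proof (rule ccontr)
    assume "\<not> ?thesis"
    hence "\<exists>c\<in>V. \<exists>a\<in>V. \<exists>b\<in>V. \<exists>d\<in>V.
      E c a \<and> E c b \<and> E c d \<and> a \<noteq> b \<and> a \<noteq> d \<and> b \<noteq> d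
      \<and> \<not> E a b \<and> \<not> E a d \<and> \<not> E b d" using V assms by blast
    thus False using cf unfolding claw_free_def by blast
  qed
qed

lemma clique_le: "is_clique V E K \<Longrightarrow> card K \<le> clique_number V E"
proof -
  assume K: "is_clique V E K"
  have "{K. is_clique V E K} \<subseteq> Pow V" unfolding is_clique_def by auto
  hence "finite {K. is_clique V E K}" using finV finite_subset by blast
  thus ?thesis unfolding clique_number_def using K by (intro Max_ge) auto
qed

lemma two_le_w: "E a b \<Longrightarrow> 2 \<le> clique_number V E"
proof -
  assume e: "E a b"
  have "is_clique V E {a,b}" unfolding is_clique_def using e inV symE by auto
  moreover have "a \<noteq> b" using e irrE by auto
  ultimately show ?thesis using clique_le by fastforce
qed

lemma small_bound:
  "finite S \<Longrightarrow> S \<subseteq> V \<Longrightarrow> (\<forall>a\<in>S. \<forall>b\<in>S. \<forall>c\<in>S. a \<noteq> b \<and> a \<noteq> c \<and> b \<noteq> c \<longrightarrow> E a b \<or> E a c \<or> E b c)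
   \<Longrightarrow> (\<forall>K. K \<subseteq> S \<and> is_clique V E K \<longrightarrow> card K \<le> k) \<Longrightarrow> 2 * card S \<le> k*(k+3)"
proof (induction k arbitrary: S)
  case 0
  have "S = {}"
  proof (rule ccontr)
    assume "S \<noteq> {}"
    then obtain a where "a \<in> S" by auto
    hence "{a} \<subseteq> S \<and> is_clique V E {a}" using 0 unfolding is_clique_def by auto
    moreover have "card {a} = 1" by simp
    ultimately show False using "0.prems"(4) by (metis le_zero_eq one_neq_zero)
  qed
  thus ?case by simp
next
  case (Suc k)
  show ?case
  proof (cases "S = {}")
    case True thus ?thesis by simp
  next
    case False
    then obtain u where u: "u \<in> S" by auto
    define C where "C = {a\<in>S. a \<noteq> u \<and> \<not> E u a}"
    define B where "B = {a\<in>S. E u a}"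
    have SU: "S \<subseteq> insert u (C \<union> B)" unfolding C_def B_def by auto
    have finC: "finite C" "finite B" using Suc.prems(1) unfolding C_def B_def by auto
    have "is_clique V E C"
      unfolding is_clique_def
    proof
      show "C \<subseteq> V" using Suc.prems unfolding C_def by auto
      show "\<forall>x\<in>C. \<forall>y\<in>C. x \<noteq> y \<longrightarrow> E x y"
      proof (intro ballI impI)
        fix x y assume "x \<in> C" "y \<in> C" "x \<noteq> y"
        hence "x \<in> S" "y \<in> S" "x \<noteq> u" "y \<noteq> u" "\<not> E u x" "\<not> E u y" unfolding C_def by auto
        hence "E u x \<or> E u y \<or> E x y" using Suc.prems(3)[rule_format, of u x y] u \<open>x \<noteq> y\<close> by simp
        thus "E x y" using \<open>\<not> E u x\<close> \<open>\<not> E u y\<close> by blast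
      qed
    qed
    moreover have "C \<subseteq> S" unfolding C_def by auto
    ultimately have cC: "card C \<le> Suc k" using Suc.prems(4) by blast
    have "2 * card B \<le> k*(k+3)"
    proof (rule Suc.IH)
      show "finite B" by fact
      show "B \<subseteq> V" using Suc.prems unfolding B_def by auto
      show "\<forall>a\<in>B. \<forall>b\<in>B. \<forall>c\<in>B. a \<noteq> b \<and> a \<noteq> c \<and> b \<noteq> c \<longrightarrow> E a b \<or> E a c \<or> E b c"
      proof (intro ballI impI)
        fix a b c assume "a \<in> B" "b \<in> B" "c \<in> B" "a \<noteq> b \<and> a \<noteq> c \<and> b \<noteq> c"
        thus "E a b \<or> E a c \<or> E b c" using Suc.prems(3)[rule_format, of a b c] unfolding B_def by simp
      qed
      show "\<forall>K. K \<subseteq> B \<and> is_clique V E K \<longrightarrow> card K \<le> k"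
      proof (intro allI impI)
        fix K assume K: "K \<subseteq> B \<and> is_clique V E K"
        have "u \<notin> K" using K irrE unfolding B_def by auto
        have "is_clique V E (insert u K)" using K u Suc.prems(2) symE
          unfolding is_clique_def B_def by auto
        moreover have "insert u K \<subseteq> S" using K u unfolding B_def by auto
        ultimately have "card (insert u K) \<le> Suc k" using Suc.prems(4) by simp
        moreover have "finite K" using K finC(2) finite_subset by blast
        ultimately show "card K \<le> k" using \<open>u \<notin> K\<close> by simp
      qed
    qed
    moreover have "card S \<le> Suc (card C + card B)"
    proof -
      have "card S \<le> card (insert u (C \<union> B))" using SU finC by (intro card_mono) auto
      also have "\<dots> \<le> Suc (card (C \<union> B))" by (rule card_insert_le_m1) auto
      also have "\<dots> \<le> Suc (card C + card B)" using card_Un_le by auto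
      finally show ?thesis .
    qed
    moreover have "Suc k * (Suc k + 3) = k*(k+3) + 2*k + 4" by (simp add: algebra_simps)
    ultimately show ?thesis using cC by linarith
  qed
qed


lemma deg_bound:
  assumes vV: "v \<in> V"
  shows "card {y. graph_square V E v y} \<le> 2 * (clique_number V E)^2 - 2 * clique_number V E"
proof -
  define w where "w = clique_number V E"
  define N where "N = {y. E v y}"
  define X where "X = (\<lambda>u. {x. E u x \<and> x \<noteq> v \<and> \<not> E v x})"
  define M where "M = (\<Union>u\<in>N. X u)"
  define A where "A = (\<lambda>x. {u\<in>N. E u x})"
  define n where "n = card N"
  have NV: "N \<subseteq> V" unfolding N_def using inV by auto
  have finN: "finite N" using NV finV finite_subset by blast
  have XV: "X u \<subseteq> V" for u unfolding X_def using inV by auto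
  have finX: "finite (X u)" for u using XV finV finite_subset by blast
  have finM: "finite M" unfolding M_def using finN finX by auto
  have vN: "v \<notin> N" unfolding N_def using irrE by auto
  have sq: "{y. graph_square V E v y} \<subseteq> N \<union> M"
  proof
    fix y assume "y \<in> {y. graph_square V E v y}"
    hence y: "y \<noteq> v" "E v y \<or> (\<exists>z\<in>V. E v z \<and> E z y)" unfolding graph_square_def by auto
    show "y \<in> N \<union> M"
    proof (cases "E v y")
      case True thus ?thesis unfolding N_def by auto
    next
      case False
      then obtain z where "E v z" "E z y" using y by auto
      thus ?thesis using False y unfolding M_def N_def X_def by auto
    qed
  qed
  have cX: "card (X u) + 1 \<le> w" if uN: "u \<in> N" for u
  proof -
    have uX: "u \<notin> X u" unfolding X_def using irrE by auto
    have "is_clique V E (insert u (X u))"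
      unfolding is_clique_def
    proof
      show "insert u (X u) \<subseteq> V" using XV uN NV by auto
      show "\<forall>x\<in>insert u (X u). \<forall>y\<in>insert u (X u). x \<noteq> y \<longrightarrow> E x y"
      proof (intro ballI impI)
        fix x y assume xy: "x \<in> insert u (X u)" "y \<in> insert u (X u)" "x \<noteq> y"
        have evu: "E u v" using uN symE unfolding N_def by auto
        show "E x y"
        proof (cases "x = u")
          case True thus ?thesis using xy unfolding X_def by auto
        next
          case False
          show ?thesis
          proof (cases "y = u")
            case True thus ?thesis using xy False symE unfolding X_def by auto
          next
            case False2: False
            have "x \<in> X u" "y \<in> X u" using xy False False2 by auto
            hence h: "E u x" "E u y" "x \<noteq> v" "y \<noteq> v" "\<not> E v x" "\<not> E v y" unfolding X_def by auto
            have "E v x \<or> E v y \<or> E x y" by (rule noclaw[OF evu h(1) h(2)]) (use h xy in auto)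
            thus ?thesis using h by auto
          qed
        qed
      qed
    qed
    hence "card (insert u (X u)) \<le> w" unfolding w_def by (rule clique_le)
    thus ?thesis using uX finX by simp
  qed
  have cM: "card M \<le> (\<Sum>u\<in>N. card (X u))" unfolding M_def using card_UN_le[OF finN] by blast
  have sX: "(\<Sum>u\<in>N. card (X u)) \<le> n * (w - 1)"
  proof -
    have "(\<Sum>u\<in>N. card (X u)) \<le> (\<Sum>u\<in>N. w - 1)" using cX by (intro sum_mono) fastforce
    thus ?thesis unfolding n_def by simp
  qed
  have cM2: "card M \<le> n * (w - 1)" using cM sX by linarith
  have tot: "card {y. graph_square V E v y} \<le> n + card M"
  proof -
    have "card {y. graph_square V E v y} \<le> card (N \<union> M)" using sq finN finM by (intro card_mono) auto
    also have "\<dots> \<le> n + card M" unfolding n_def by (rule card_Un_le)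
    finally show ?thesis .
  qed
  show ?thesis
  proof (cases "N = {}")
    case True
    hence "M = {}" unfolding M_def by auto
    thus ?thesis using tot True unfolding n_def by simp
  next
    case False
    then obtain u0 where "u0 \<in> N" by auto
    hence w2: "2 \<le> w" unfolding w_def N_def using two_le_w by auto
    show ?thesis
    proof (cases "n \<le> 2*w - 2")
      case True
      have "n + card M \<le> n * w" using cM2 w2
        by (metis add.commute add_le_mono1 le_add_diff_inverse2 mult.commute mult_Suc one_le_numeral order_trans plus_1_eq_Suc Suc_1 mult_le_mono1 order_refl) 
      also have "\<dots> \<le> (2*w-2)*w" using True by simp
      also have "\<dots> = 2*w^2 - 2*w" by (simp add: power2_eq_square algebra_simps diff_mult_distrib)
      finally show ?thesis using tot unfolding w_def by simp
    next
      case False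
      have lowA: "n + 3 \<le> card (A x) + 2*w" if xM: "x \<in> M" for x
      proof -
        obtain u where u: "u \<in> N" "x \<in> X u" using xM unfolding M_def by auto
        have hx: "E u x" "x \<noteq> v" "\<not> E v x" using u unfolding X_def by auto
        have evu: "E v u" "E u v" using u symE unfolding N_def by auto
        have xN: "x \<notin> N" using hx unfolding N_def by auto
        define C where "C = {a\<in>N. a \<noteq> u \<and> \<not> E u a}"
        define D where "D = {a\<in>N. E u a \<and> \<not> E a x}"
        have NCD: "N \<subseteq> C \<union> D \<union> A x" unfolding C_def D_def A_def using hx(1) by auto
        have finC: "finite C" "finite D" "finite (A x)" unfolding C_def D_def A_def using finN by auto
        have cC: "card C + 1 \<le> w"
        proof -
          have "is_clique V E (insert v C)"
            unfolding is_clique_def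
          proof
            show "insert v C \<subseteq> V" using vV NV unfolding C_def by auto
            show "\<forall>a\<in>insert v C. \<forall>b\<in>insert v C. a \<noteq> b \<longrightarrow> E a b"
            proof (intro ballI impI)
              fix a b assume ab: "a \<in> insert v C" "b \<in> insert v C" "a \<noteq> b"
              show "E a b"
              proof (cases "a = v \<or> b = v")
                case True thus ?thesis using ab symE unfolding C_def N_def by auto
              next
                case False
                hence h: "E v a" "E v b" "a \<noteq> u" "b \<noteq> u" "\<not> E u a" "\<not> E u b"
                  using ab unfolding C_def N_def by auto
                have "E u a \<or> E u b \<or> E a b" by (rule noclaw[OF evu(1) h(1) h(2)]) (use h ab in auto)
                thus ?thesis using h by auto
              qed
            qed
          qed
          hence "card (insert v C) \<le> w" unfolding w_def by (rule clique_le)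
          moreover have "v \<notin> C" using vN unfolding C_def by auto
          ultimately show ?thesis using finC by simp
        qed
        have cD: "card D + 2 \<le> w"
        proof -
          have "is_clique V E (insert u (insert v D))"
            unfolding is_clique_def
          proof
            show "insert u (insert v D) \<subseteq> V" using vV NV u unfolding D_def by auto
            show "\<forall>a\<in>insert u (insert v D). \<forall>b\<in>insert u (insert v D). a \<noteq> b \<longrightarrow> E a b"
            proof (intro ballI impI)
              fix a b assume ab: "a \<in> insert u (insert v D)" "b \<in> insert u (insert v D)" "a \<noteq> b"
              show "E a b"
              proof (cases "a \<in> D \<and> b \<in> D")
                case False thus ?thesis using ab symE evu unfolding D_def N_def by auto
              next
                case True
                hence h: "E u a" "E u b" "\<not> E a x" "\<not> E b x" "a \<in> N" "b \<in> N"
                  unfolding D_def by auto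
                have "a \<noteq> x" "b \<noteq> x" using h xN by auto
                have "E a b \<or> E a x \<or> E b x" by (rule noclaw[OF h(1) h(2) hx(1)]) (use h ab \<open>a \<noteq> x\<close> \<open>b \<noteq> x\<close> in auto)
                thus ?thesis using h by auto
              qed
            qed
          qed
          hence "card (insert u (insert v D)) \<le> w" unfolding w_def by (rule clique_le)
          moreover have "v \<notin> D" using vN unfolding D_def by auto
          moreover have "u \<notin> D" using irrE unfolding D_def by auto
          moreover have "u \<noteq> v" using u vN by auto
          ultimately show ?thesis using finC by simp
        qed
        have "n \<le> card (C \<union> D \<union> A x)" unfolding n_def using NCD finC by (intro card_mono) auto
        also have "\<dots> \<le> card C + card D + card (A x)" by (meson card_Un_le add_le_mono1 order_trans)
        finally show ?thesis using cC cD by linarith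
      qed
      have dc: "(\<Sum>x\<in>M. card (A x)) = (\<Sum>u\<in>N. card (X u))"
      proof -
        have finA: "finite (A x)" for x unfolding A_def using finN by auto
        have "(\<Sum>x\<in>M. card (A x)) = card (SIGMA x:M. A x)" using finM finA by (simp add: card_SigmaI)
        also have "\<dots> = card ((\<lambda>(x,u). (u,x)) ` (SIGMA x:M. A x))"
          by (rule card_image[symmetric]) (auto simp: inj_on_def)
        also have "(\<lambda>(x,u). (u,x)) ` (SIGMA x:M. A x) = (SIGMA u:N. X u)"
        proof
          show "(\<lambda>(x,u). (u,x)) ` (SIGMA x:M. A x) \<subseteq> (SIGMA u:N. X u)"
            unfolding A_def M_def X_def by auto
          show "(SIGMA u:N. X u) \<subseteq> (\<lambda>(x,u). (u,x)) ` (SIGMA x:M. A x)"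
          proof
            fix p assume "p \<in> (SIGMA u:N. X u)"
            then obtain u x where p: "p = (u,x)" "u \<in> N" "x \<in> X u" by auto
            hence "x \<in> M" "u \<in> A x" unfolding M_def A_def X_def by auto
            thus "p \<in> (\<lambda>(x,u). (u,x)) ` (SIGMA x:M. A x)" using p by force
          qed
        qed
        also have "card (SIGMA u:N. X u) = (\<Sum>u\<in>N. card (X u))" using finN finX by (simp add: card_SigmaI)
        finally show ?thesis .
      qed
      have "card M * (n + 3 - 2*w) \<le> (\<Sum>x\<in>M. card (A x))"
      proof -
        have "(\<Sum>x\<in>M. n + 3 - 2*w) \<le> (\<Sum>x\<in>M. card (A x))" using lowA by (intro sum_mono) fastforce
        thus ?thesis by simp
      qed
      hence c3: "card M * (n + 3 - 2*w) \<le> n * (w - 1)" using dc sX by linarith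
      have c4: "2 * n \<le> (w-1)*((w-1)+3)" unfolding n_def
      proof (rule small_bound[OF finN NV])
        show "\<forall>a\<in>N. \<forall>b\<in>N. \<forall>c\<in>N. a \<noteq> b \<and> a \<noteq> c \<and> b \<noteq> c \<longrightarrow> E a b \<or> E a c \<or> E b c"
        proof (intro ballI impI)
          fix a b c assume "a \<in> N" "b \<in> N" "c \<in> N" "a \<noteq> b \<and> a \<noteq> c \<and> b \<noteq> c"
          thus "E a b \<or> E a c \<or> E b c" using noclaw[of v a b c] unfolding N_def by auto
        qed
        show "\<forall>K. K \<subseteq> N \<and> is_clique V E K \<longrightarrow> card K \<le> w - 1"
        proof (intro allI impI)
          fix K assume K: "K \<subseteq> N \<and> is_clique V E K"
          have "is_clique V E (insert v K)" using K vV symE unfolding is_clique_def N_def by auto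
          hence "card (insert v K) \<le> w" unfolding w_def by (rule clique_le)
          moreover have "v \<notin> K" using K vN by auto
          moreover have "finite K" using K finN finite_subset by blast
          ultimately show "card K \<le> w - 1" by simp
        qed
      qed
      hence c4: "2 * n \<le> (w-1)*(w+2)" using w2 by (simp add: algebra_simps)
      have "n + card M \<le> 2*w^2 - 2*w" using arith_final[OF w2 _ c3 c4] False by simp
      thus ?thesis using tot unfolding w_def by simp
    qed
  qed
qed

end

theorem mainTheorem7:
  fixes V :: "'a set" and E :: "'a \<Rightarrow> 'a \<Rightarrow> bool"
  assumes "simple_graph V E" and "claw_free V E"
  shows "chromatic_number V (graph_square V E)
           \<le> 2 * (clique_number V E)^2 - 2 * clique_number V E + 1"
proof -
  define D where "D = 2 * (clique_number V E)^2 - 2 * clique_number V E"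
  have fin: "finite V" using finV[OF assms] .
  have "\<exists>f. (\<forall>x\<in>V. f x < Suc D) \<and> (\<forall>x\<in>V. \<forall>y\<in>V. graph_square V E x y \<longrightarrow> f x \<noteq> f y)"
  proof (rule greedy[OF fin _ _ _ fin order_refl])
    fix x assume "x \<in> V"
    thus "{y. graph_square V E x y} \<subseteq> V \<and> card {y. graph_square V E x y} \<le> D"
      using deg_bound[OF assms] unfolding D_def graph_square_def by auto
  next
    fix x y assume "graph_square V E x y"
    thus "graph_square V E y x" using symE[OF assms] unfolding graph_square_def by blast
  next
    fix x show "\<not> graph_square V E x x" unfolding graph_square_def by auto
  qed
  hence "\<exists>f. proper_colouring V (graph_square V E) (Suc D) f" unfolding proper_colouring_def by blast
  hence "chromatic_number V (graph_square V E) \<le> Suc D"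
    unfolding chromatic_number_def by (metis Least_le)
  thus ?thesis unfolding D_def by simp
qed

end
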